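(* Let $G$ be a compact abelian group and $H$ a closed subgroup of $G$. Then $\lambda(G)\le\lambda(G/H)$.
   Context: For a compact abelian group $G$ with normalized Haar measure $\mu$ and (multiplicative) dual group of characters $\widehat{G}$, let $\mathbb{Z}[\widehat{G}]$ denote the ring of integral linear combinations of characters, regarded as functions on $G$. For $f\in\mathbb{Z}[\widehat{G}]$, the logarithmic Mahler measure over $G$ is $\mathsf{m}_G(f)=\int_G\log|f|\,d\mu$ (with $\log 0=-\infty$). The Lehmer constant of $G$ is $\lambda(G)=\inf\{\mathsf{m}_G(f): f\in\mathbb{Z}[\widehat{G}],\ \mathsf{m}_G(f)>0\}$ (the infimum of the empty set being $+\infty$). *)

theory Defs
  imports "HOL-Analysis.Analysis"
begin

text \<open>Compact abelian groups are modelled as types of sort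
  topological_group_add, ab_group_add, t2_space with compact UNIV
  (group written additively).\<close>

definition haar :: "('a::{topological_group_add,ab_group_add,t2_space}) measure \<Rightarrow> bool" where
  "haar \<mu> \<longleftrightarrow> sets \<mu> = sets borel \<and> space \<mu> = UNIV \<and> emeasure \<mu> UNIV = 1 \<and>
     (\<forall>g A. A \<in> sets borel \<longrightarrow> emeasure \<mu> ((\<lambda>x. g + x) ` A) = emeasure \<mu> A) \<and>
     (\<forall>U. open U \<longrightarrow> emeasure \<mu> U = (SUP C\<in>{C. compact C \<and> C \<subseteq> U}. emeasure \<mu> C)) \<and>
     (\<forall>A. A \<in> sets borel \<longrightarrow> emeasure \<mu> A = (INF U\<in>{U. open U \<and> A \<subseteq> U}. emeasure \<mu> U))"

definition characters :: "('a::{topological_group_add,ab_group_add} \<Rightarrow> complex) set" where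
  "characters = {chr. continuous_on UNIV chr \<and> (\<forall>x y. chr (x + y) = chr x * chr y) \<and>
                      (\<forall>x. cmod (chr x) = 1)}"

definition int_char_combs :: "('a::{topological_group_add,ab_group_add} \<Rightarrow> complex) set" where
  "int_char_combs = {f. \<exists>S c. finite S \<and> S \<subseteq> characters \<and>
       f = (\<lambda>x. \<Sum>chr\<in>S. of_int (c chr) * chr x)}"

text \<open>Logarithmic Mahler measure, value in the extended reals, with log 0 = -infinity:
  integral of the positive part minus integral of the negative part.\<close>
definition mahler :: "'a measure \<Rightarrow> ('a \<Rightarrow> complex) \<Rightarrow> ereal" where
  "mahler \<mu> f =
     enn2ereal (\<integral>\<^sup>+ x. ennreal (max 0 (ln (cmod (f x)))) \<partial>\<mu>) -
     enn2ereal (\<integral>\<^sup>+ x. (if f x = 0 then \<infinity> else ennreal (max 0 (- ln (cmod (f x))))) \<partial>\<mu>)"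

text \<open>Lehmer constant (Inf of the empty set of ereals is +infinity).\<close>
definition lehmer :: "('a::{topological_group_add,ab_group_add}) measure \<Rightarrow> ereal" where
  "lehmer \<mu> = Inf {mahler \<mu> f | f. f \<in> int_char_combs \<and> mahler \<mu> f > 0}"

end

theory Submission
  imports Defs "HOL-Probability.Probability" "HOL-Computational_Algebra.Polynomial"
begin

lemma haar_prob: "haar \<nu> \<Longrightarrow> prob_space \<nu>"
  unfolding haar_def by (intro prob_spaceI) auto

lemma haar_sets: "haar \<nu> \<Longrightarrow> sets \<nu> = sets borel"
  unfolding haar_def by auto

lemma haar_space: "haar \<nu> \<Longrightarrow> space \<nu> = UNIV"
  unfolding haar_def by auto

lemma cont_meas:
  fixes F :: "'a::topological_space \<Rightarrow> 'b::topological_space"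
  assumes "sets \<nu> = sets borel" "continuous_on UNIV F"
  shows "F \<in> borel_measurable \<nu>"
  by (subst measurable_cong_sets[OF assms(1) refl]) (rule borel_measurable_continuous_onI[OF assms(2)])

lemma haar_transl:
  fixes \<nu> :: "('b::{topological_group_add,ab_group_add,t2_space}) measure"
  assumes h: "haar \<nu>"
  shows "distr \<nu> \<nu> (\<lambda>y. b + y) = \<nu>"
proof (rule measure_eqI)
  have meas: "(\<lambda>y. b + y) \<in> measurable \<nu> \<nu>"
    using measurable_cong_sets[OF haar_sets[OF h] haar_sets[OF h]]
    by (simp add: borel_measurable_continuous_onI continuous_intros)
  show "sets (distr \<nu> \<nu> (\<lambda>y. b + y)) = sets \<nu>" by simp
  fix A assume "A \<in> sets (distr \<nu> \<nu> (\<lambda>y. b + y))"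
  hence A: "A \<in> sets borel" using haar_sets[OF h] by simp
  have eq: "(\<lambda>y. b + y) -` A \<inter> space \<nu> = (\<lambda>y. - b + y) ` A"
    using haar_space[OF h] by (auto simp: image_iff) (metis add_diff_cancel_left')
  show "emeasure (distr \<nu> \<nu> (\<lambda>y. b + y)) A = emeasure \<nu> A"
  proof -
    have "emeasure (distr \<nu> \<nu> (\<lambda>y. b + y)) A = emeasure \<nu> ((\<lambda>y. b + y) -` A \<inter> space \<nu>)"
      using \<open>A \<in> sets (distr \<nu> \<nu> (\<lambda>y. b + y))\<close> by (simp add: emeasure_distr[OF meas])
    also have "\<dots> = emeasure \<nu> ((\<lambda>y. - b + y) ` A)" by (simp only: eq)
    also have "\<dots> = emeasure \<nu> A" using h A unfolding haar_def by blast
    finally show ?thesis .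
  qed
qed

lemma char_cont: "chr \<in> characters \<Longrightarrow> continuous_on UNIV chr"
  unfolding characters_def by auto

lemma char_bound: "chr \<in> characters \<Longrightarrow> cmod (chr x) = 1"
  unfolding characters_def by auto

lemma char_add: "chr \<in> characters \<Longrightarrow> chr (x + y) = chr x * chr y"
  unfolding characters_def by auto

lemma haar_integrable:
  fixes F :: "'b::{topological_group_add,ab_group_add,t2_space} \<Rightarrow> complex"
  assumes h: "haar \<nu>" and c: "continuous_on UNIV F" and b: "\<And>x. norm (F x) \<le> B"
  shows "integrable \<nu> F"
proof -
  interpret prob_space \<nu> using haar_prob[OF h] .
  show ?thesis
    by (rule integrable_const_bound[where B=B]) (use b cont_meas[OF haar_sets[OF h] c] in auto)
qed

lemma haar_char_integral:
  fixes \<nu> :: "('b::{topological_group_add,ab_group_add,t2_space}) measure"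
  assumes h: "haar \<nu>" and chr: "chr \<in> characters"
  shows "integral\<^sup>L \<nu> chr = (if \<forall>x. chr x = 1 then 1 else 0)"
proof (cases "\<forall>x. chr x = 1")
  case True
  interpret prob_space \<nu> using haar_prob[OF h] .
  have "chr = (\<lambda>_. 1)" using True by auto
  then show ?thesis using True by (simp add: prob_space)
next
  case False
  then obtain b where b: "chr b \<noteq> 1" by auto
  have meas: "(\<lambda>y. b + y) \<in> measurable \<nu> \<nu>"
    using measurable_cong_sets[OF haar_sets[OF h] haar_sets[OF h]]
    by (simp add: borel_measurable_continuous_onI continuous_intros)
  have cm: "chr \<in> borel_measurable \<nu>" by (rule cont_meas[OF haar_sets[OF h] char_cont[OF chr]])
  have "integral\<^sup>L \<nu> chr = integral\<^sup>L (distr \<nu> \<nu> (\<lambda>y. b + y)) chr"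
    by (simp add: haar_transl[OF h])
  also have "\<dots> = integral\<^sup>L \<nu> (\<lambda>y. chr (b + y))"
    by (rule integral_distr[OF meas cm])
  also have "\<dots> = integral\<^sup>L \<nu> (\<lambda>y. chr b * chr y)"
    by (simp add: char_add[OF chr])
  also have "\<dots> = chr b * integral\<^sup>L \<nu> chr" by simp
  finally have "(1 - chr b) * integral\<^sup>L \<nu> chr = 0" by (simp add: algebra_simps)
  then show ?thesis using b False by simp
qed

inductive_set tpoly :: "('b::{topological_group_add,ab_group_add} \<Rightarrow> complex) set" where
  tp_char: "chr \<in> characters \<Longrightarrow> chr \<in> tpoly"
| tp_add: "F \<in> tpoly \<Longrightarrow> G \<in> tpoly \<Longrightarrow> (\<lambda>x. F x + G x) \<in> tpoly"
| tp_smult: "F \<in> tpoly \<Longrightarrow> (\<lambda>x. c * F x) \<in> tpoly"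

lemma tpoly_cont: "F \<in> tpoly \<Longrightarrow> continuous_on UNIV F"
  by (induction rule: tpoly.induct) (auto intro!: continuous_intros simp: char_cont)

lemma tpoly_bdd: "F \<in> tpoly \<Longrightarrow> \<exists>B. \<forall>x. norm (F x) \<le> B"
proof (induction rule: tpoly.induct)
  case (tp_char chr) then show ?case using char_bound by (metis order_refl)
next
  case (tp_add F G)
  then obtain B1 B2 where "\<forall>x. norm (F x) \<le> B1" "\<forall>x. norm (G x) \<le> B2" by auto
  then have "\<forall>x. norm (F x + G x) \<le> B1 + B2" by (metis add_mono norm_triangle_le)
  then show ?case by blast
next
  case (tp_smult F c)
  then obtain B1 where "\<forall>x. norm (F x) \<le> B1" by auto
  then have "\<forall>x. norm (c * F x) \<le> norm c * B1" by (simp add: norm_mult mult_left_mono)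
  then show ?case by blast
qed

lemma char_one: "(\<lambda>x. 1) \<in> characters"
  unfolding characters_def by auto

lemma char_mult: "chr1 \<in> characters \<Longrightarrow> chr2 \<in> characters \<Longrightarrow> (\<lambda>x. chr1 x * chr2 x) \<in> characters"
  unfolding characters_def by (auto intro!: continuous_intros simp: norm_mult)

lemma char_cnj: "chr \<in> characters \<Longrightarrow> (\<lambda>x. cnj (chr x)) \<in> characters"
  unfolding characters_def by (auto intro!: continuous_intros)

lemma tpoly_const: "(\<lambda>x. c) \<in> tpoly"
  using tp_smult[OF tp_char[OF char_one], of c] by simp

lemma tpoly_mult_char: "F \<in> tpoly \<Longrightarrow> chr \<in> characters \<Longrightarrow> (\<lambda>x. F x * chr x) \<in> tpoly"
proof (induction rule: tpoly.induct)
  case (tp_char chr1) then show ?case by (intro tpoly.tp_char char_mult)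
next
  case (tp_add F G) then show ?case using tpoly.tp_add[of "\<lambda>x. F x * chr x" "\<lambda>x. G x * chr x"]
    by (simp add: distrib_right)
next
  case (tp_smult F c) then show ?case using tpoly.tp_smult[of "\<lambda>x. F x * chr x" c]
    by (simp add: mult.assoc)
qed

lemma tpoly_mult: assumes F: "F \<in> tpoly" and G: "G \<in> tpoly" shows "(\<lambda>x. F x * G x) \<in> tpoly"
  using G
proof (induction rule: tpoly.induct)
  case (tp_char chr) then show ?case by (intro tpoly_mult_char F)
next
  case (tp_add G1 G2) then show ?case using tpoly.tp_add[of "\<lambda>x. F x * G1 x" "\<lambda>x. F x * G2 x"]
    by (simp add: distrib_left)
next
  case (tp_smult G c) then show ?case using tpoly.tp_smult[of "\<lambda>x. F x * G x" c]
    by (simp add: algebra_simps)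
qed

lemma tpoly_cnj: "F \<in> tpoly \<Longrightarrow> (\<lambda>x. cnj (F x)) \<in> tpoly"
  by (induction rule: tpoly.induct) (auto intro: tpoly.intros char_cnj)

lemma tpoly_pow: "F \<in> tpoly \<Longrightarrow> (\<lambda>x. F x ^ k) \<in> tpoly"
  by (induction k) (auto intro: tpoly_mult tpoly_const)

lemma int_char_combs_tpoly: "f \<in> int_char_combs \<Longrightarrow> f \<in> tpoly"
proof -
  assume "f \<in> int_char_combs"
  then obtain S c where S: "finite S" "S \<subseteq> characters" and f: "f = (\<lambda>x. \<Sum>chr\<in>S. of_int (c chr) * chr x)"
    unfolding int_char_combs_def by auto
  have "S \<subseteq> characters \<Longrightarrow> (\<lambda>x. \<Sum>chr\<in>S. of_int (c chr) * chr x) \<in> tpoly" using S(1)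
  proof (induction S rule: finite_induct)
    case empty then show ?case using tpoly_const[of 0] by simp
  next
    case (insert a S)
    have "(\<lambda>x. of_int (c a) * a x) \<in> tpoly" by (intro tpoly.tp_smult tpoly.tp_char) (use insert in auto)
    from tpoly.tp_add[OF this insert.IH] insert show ?case by simp
  qed
  then show ?thesis using f S by simp
qed

lemma char_comp:
  fixes \<pi> :: "'a::{topological_group_add,ab_group_add} \<Rightarrow> 'b::{topological_group_add,ab_group_add}"
  assumes "continuous_on UNIV \<pi>" "\<forall>x y. \<pi> (x + y) = \<pi> x + \<pi> y" "chr \<in> characters"
  shows "(\<lambda>x. chr (\<pi> x)) \<in> characters"
  using assms unfolding characters_def
  by (auto intro: continuous_on_compose2[where f=\<pi> and g=chr and t=UNIV])

lemma tpoly_pull: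
  fixes \<mu> :: "('a::{topological_group_add,ab_group_add,t2_space}) measure"
    and \<nu> :: "('b::{topological_group_add,ab_group_add,t2_space}) measure"
    and \<pi> :: "'a \<Rightarrow> 'b"
  assumes hm: "haar \<mu>" and hn: "haar \<nu>"
    and pc: "continuous_on UNIV \<pi>" and ph: "\<forall>x y. \<pi> (x + y) = \<pi> x + \<pi> y" and ps: "surj \<pi>"
    and F: "F \<in> tpoly"
  shows "integral\<^sup>L \<mu> (\<lambda>x. F (\<pi> x)) = integral\<^sup>L \<nu> F"
  using F
proof (induction rule: tpoly.induct)
  case (tp_char chr)
  have c2: "(\<lambda>x. chr (\<pi> x)) \<in> characters" by (rule char_comp[OF pc ph tp_char])
  have "(\<forall>x. chr (\<pi> x) = 1) = (\<forall>y. chr y = 1)" using ps by (metis surjD)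
  then show ?case using haar_char_integral[OF hm c2] haar_char_integral[OF hn tp_char] by simp
next
  case (tp_add F G)
  have int: "integrable \<mu> (\<lambda>x. H (\<pi> x))" "integrable \<nu> H" if HT: "H \<in> tpoly" for H
  proof -
    obtain B where B: "\<forall>x. norm (H x) \<le> B" using tpoly_bdd[OF HT] by auto
    have c: "continuous_on UNIV H" by (rule tpoly_cont[OF HT])
    show "integrable \<nu> H" using haar_integrable[OF hn c] B by auto
    have "continuous_on UNIV (\<lambda>x. H (\<pi> x))" using c pc
      by (auto intro: continuous_on_compose2[where f=\<pi> and g=H and t=UNIV])
    then show "integrable \<mu> (\<lambda>x. H (\<pi> x))" using haar_integrable[OF hm] B by auto
  qed
  show ?case using tp_add int[OF tp_add.hyps(1)] int[OF tp_add.hyps(2)] by simp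
next
  case (tp_smult F c)
  then show ?case by simp
qed

lemma int_comp_bdd:
  fixes h :: "real \<Rightarrow> 'z::{banach,second_countable_topology}"
  assumes P: "prob_space M" and Y: "Y \<in> borel_measurable M" and S: "compact S"
    and YS: "\<forall>x\<in>space M. Y x \<in> S" and h: "continuous_on UNIV h"
  shows "integrable M (\<lambda>x. h (Y x))"
proof -
  interpret prob_space M by (rule P)
  have "compact (h ` S)" by (rule compact_continuous_image[OF continuous_on_subset[OF h] S]) auto
  then obtain B where B: "\<forall>z\<in>h ` S. norm z \<le> B" using compact_imp_bounded bounded_iff by metis
  have hm: "h \<in> borel_measurable borel" by (rule borel_measurable_continuous_onI[OF h])
  show ?thesis
  proof (rule integrable_const_bound[where B=B])
    show "AE x in M. norm (h (Y x)) \<le> B" using B YS by (intro AE_I2) auto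
    show "(\<lambda>x. h (Y x)) \<in> borel_measurable M" using measurable_compose[OF Y hm] by (simp add: o_def)
  qed
qed

lemma moments_to_cont:
  fixes Y1 :: "'a \<Rightarrow> real" and Y2 :: "'c \<Rightarrow> real" and g :: "real \<Rightarrow> real"
  assumes P1: "prob_space M1" and P2: "prob_space M2"
    and Y1: "Y1 \<in> borel_measurable M1" and Y2: "Y2 \<in> borel_measurable M2"
    and S: "compact S" and S1: "\<forall>x\<in>space M1. Y1 x \<in> S" and S2: "\<forall>x\<in>space M2. Y2 x \<in> S"
    and mom: "\<And>k. integral\<^sup>L M1 (\<lambda>x. Y1 x ^ k) = integral\<^sup>L M2 (\<lambda>x. Y2 x ^ k)"
    and g: "continuous_on UNIV g"
  shows "integral\<^sup>L M1 (\<lambda>x. g (Y1 x)) = integral\<^sup>L M2 (\<lambda>x. g (Y2 x))"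
proof -
  have I1: "integrable M1 (\<lambda>x. h (Y1 x))" if "continuous_on UNIV h" for h :: "real \<Rightarrow> real"
    by (rule int_comp_bdd[OF P1 Y1 S S1 that])
  have I2: "integrable M2 (\<lambda>x. h (Y2 x))" if "continuous_on UNIV h" for h :: "real \<Rightarrow> real"
    by (rule int_comp_bdd[OF P2 Y2 S S2 that])
  have polyeq: "integral\<^sup>L M1 (\<lambda>x. poly p (Y1 x)) = integral\<^sup>L M2 (\<lambda>x. poly p (Y2 x))" for p
  proof -
    have "integral\<^sup>L M1 (\<lambda>x. poly p (Y1 x)) = (\<Sum>i\<le>degree p. coeff p i * integral\<^sup>L M1 (\<lambda>x. Y1 x ^ i))"
      unfolding poly_altdef
    proof -
      have "integral\<^sup>L M1 (\<lambda>x. \<Sum>i\<le>degree p. coeff p i * Y1 x ^ i) = (\<Sum>i\<le>degree p. integral\<^sup>L M1 (\<lambda>x. coeff p i * Y1 x ^ i))"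
        by (rule Bochner_Integration.integral_sum) (auto intro!: I1 continuous_intros)
      then show "integral\<^sup>L M1 (\<lambda>x. \<Sum>i\<le>degree p. coeff p i * Y1 x ^ i) = (\<Sum>i\<le>degree p. coeff p i * integral\<^sup>L M1 (\<lambda>x. Y1 x ^ i))"
        by simp
    qed
    also have "\<dots> = (\<Sum>i\<le>degree p. coeff p i * integral\<^sup>L M2 (\<lambda>x. Y2 x ^ i))" by (simp add: mom)
    also have "\<dots> = integral\<^sup>L M2 (\<lambda>x. poly p (Y2 x))"
      unfolding poly_altdef
    proof (rule sym) 
      have "integral\<^sup>L M2 (\<lambda>x. \<Sum>i\<le>degree p. coeff p i * Y2 x ^ i) = (\<Sum>i\<le>degree p. integral\<^sup>L M2 (\<lambda>x. coeff p i * Y2 x ^ i))"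
        by (rule Bochner_Integration.integral_sum) (auto intro!: I2 continuous_intros)
      then show "integral\<^sup>L M2 (\<lambda>x. \<Sum>i\<le>degree p. coeff p i * Y2 x ^ i) = (\<Sum>i\<le>degree p. coeff p i * integral\<^sup>L M2 (\<lambda>x. Y2 x ^ i))"
        by simp
    qed
    finally show ?thesis .
  qed
  have approx: "\<bar>integral\<^sup>L M1 (\<lambda>x. g (Y1 x)) - integral\<^sup>L M2 (\<lambda>x. g (Y2 x))\<bar> \<le> 2 * e" if e: "e > 0" for e
  proof -
    have "\<exists>h. (\<lambda>h. \<exists>p. h = poly p) h \<and> (\<forall>x \<in> S. \<bar>g x - h x\<bar> < e)"
    proof (rule Stone_Weierstrass_HOL[OF S])
      show "\<exists>p. (\<lambda>x. c) = poly p" for c by (rule exI[where x="[:c:]"]) auto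
      show "continuous_on S h" if "\<exists>p. h = poly p" for h using that by (auto intro!: continuous_intros)
      show "\<exists>p. (\<lambda>x. f x + h x) = poly p" if "(\<exists>p. f = poly p) \<and> (\<exists>p. h = poly p)" for f h
      proof -
        from that obtain p1 p2 where "f = poly p1" "h = poly p2" by blast
        then show ?thesis by (intro exI[where x="p1 + p2"]) auto
      qed
      show "\<exists>p. (\<lambda>x. f x * h x) = poly p" if "(\<exists>p. f = poly p) \<and> (\<exists>p. h = poly p)" for f h
      proof -
        from that obtain p1 p2 where "f = poly p1" "h = poly p2" by blast
        then show ?thesis by (intro exI[where x="p1 * p2"]) auto
      qed
      show "\<exists>f. (\<exists>p. f = poly p) \<and> f x \<noteq> f y" if "x \<in> S \<and> y \<in> S \<and> x \<noteq> y" for x y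
        using that by (intro exI[where x="poly [:0, 1:]"]) auto
      show "continuous_on S g" using continuous_on_subset[OF g] by auto
    qed (rule e)
    then obtain p where p: "\<forall>x \<in> S. \<bar>g x - poly p x\<bar> < e" by auto
    have cp: "continuous_on UNIV (\<lambda>x. g x - poly p x)" by (intro continuous_intros g)
    have b1: "\<bar>integral\<^sup>L M1 (\<lambda>x. g (Y1 x)) - integral\<^sup>L M1 (\<lambda>x. poly p (Y1 x))\<bar> \<le> e"
    proof -
      interpret prob_space M1 by (rule P1)
      have i: "integrable M1 (\<lambda>x. g (Y1 x) - poly p (Y1 x))" using I1[OF cp] by simp
      have ae: "\<bar>g (Y1 x) - poly p (Y1 x)\<bar> < e" if "x \<in> space M1" for x
        using p S1 that by blast
      have "integral\<^sup>L M1 (\<lambda>x. g (Y1 x) - poly p (Y1 x)) \<le> e"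
      proof (rule integral_le_const[OF i], rule AE_I2)
        fix x assume "x \<in> space M1" from ae[OF this] show "g (Y1 x) - poly p (Y1 x) \<le> e" by linarith
      qed
      moreover have "- e \<le> integral\<^sup>L M1 (\<lambda>x. g (Y1 x) - poly p (Y1 x))"
      proof (rule integral_ge_const[OF i], rule AE_I2)
        fix x assume "x \<in> space M1" from ae[OF this] show "- e \<le> g (Y1 x) - poly p (Y1 x)" by linarith
      qed
      moreover have "integral\<^sup>L M1 (\<lambda>x. g (Y1 x) - poly p (Y1 x)) = integral\<^sup>L M1 (\<lambda>x. g (Y1 x)) - integral\<^sup>L M1 (\<lambda>x. poly p (Y1 x))"
        by (rule Bochner_Integration.integral_diff) (auto intro!: I1 g continuous_intros)
      ultimately show ?thesis by linarith
    qed
    have b2: "\<bar>integral\<^sup>L M2 (\<lambda>x. g (Y2 x)) - integral\<^sup>L M2 (\<lambda>x. poly p (Y2 x))\<bar> \<le> e"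
    proof -
      interpret prob_space M2 by (rule P2)
      have i: "integrable M2 (\<lambda>x. g (Y2 x) - poly p (Y2 x))" using I2[OF cp] by simp
      have ae: "\<bar>g (Y2 x) - poly p (Y2 x)\<bar> < e" if "x \<in> space M2" for x
        using p S2 that by blast
      have "integral\<^sup>L M2 (\<lambda>x. g (Y2 x) - poly p (Y2 x)) \<le> e"
      proof (rule integral_le_const[OF i], rule AE_I2)
        fix x assume "x \<in> space M2" from ae[OF this] show "g (Y2 x) - poly p (Y2 x) \<le> e" by linarith
      qed
      moreover have "- e \<le> integral\<^sup>L M2 (\<lambda>x. g (Y2 x) - poly p (Y2 x))"
      proof (rule integral_ge_const[OF i], rule AE_I2)
        fix x assume "x \<in> space M2" from ae[OF this] show "- e \<le> g (Y2 x) - poly p (Y2 x)" by linarith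
      qed
      moreover have "integral\<^sup>L M2 (\<lambda>x. g (Y2 x) - poly p (Y2 x)) = integral\<^sup>L M2 (\<lambda>x. g (Y2 x)) - integral\<^sup>L M2 (\<lambda>x. poly p (Y2 x))"
        by (rule Bochner_Integration.integral_diff) (auto intro!: I2 g continuous_intros)
      ultimately show ?thesis by linarith
    qed
    show ?thesis using b1 b2 polyeq[of p] by linarith
  qed
  show ?thesis
  proof (rule ccontr)
    let ?d = "\<bar>integral\<^sup>L M1 (\<lambda>x. g (Y1 x)) - integral\<^sup>L M2 (\<lambda>x. g (Y2 x))\<bar>"
    assume "\<not> ?thesis"
    then have "?d > 0" by simp
    then have d4: "?d / 4 > 0" by simp
    have aux: "\<And>d::real. 0 < d \<Longrightarrow> d \<le> 2 * (d / 4) \<Longrightarrow> False" by linarith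
    from aux[OF \<open>?d > 0\<close> approx[OF d4]] show False .
  qed
qed

lemma iexp_split: "iexp x = complex_of_real (cos x) + \<i> * complex_of_real (sin x)"
  by (simp add: cis_conv_exp[symmetric] complex_eq_iff)

lemma char_split:
  fixes Y :: "'a \<Rightarrow> real"
  assumes P: "prob_space M" and Y: "Y \<in> borel_measurable M" and S: "compact S"
    and YS: "\<forall>x\<in>space M. Y x \<in> S"
  shows "char (distr M borel Y) t =
    complex_of_real (integral\<^sup>L M (\<lambda>x. cos (t * Y x))) + \<i> * complex_of_real (integral\<^sup>L M (\<lambda>x. sin (t * Y x)))"
proof -
  have "char (distr M borel Y) t = integral\<^sup>L M (\<lambda>x. iexp (t * Y x))"
    unfolding char_def by (rule integral_distr[OF Y]) (auto intro!: borel_measurable_continuous_onI continuous_intros)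
  also have "\<dots> = integral\<^sup>L M (\<lambda>x. complex_of_real (cos (t * Y x)) + \<i> * complex_of_real (sin (t * Y x)))"
    by (simp only: iexp_split)
  also have "\<dots> = integral\<^sup>L M (\<lambda>x. complex_of_real (cos (t * Y x))) + integral\<^sup>L M (\<lambda>x. \<i> * complex_of_real (sin (t * Y x)))"
    by (rule Bochner_Integration.integral_add; rule int_comp_bdd[OF P Y S YS]) (auto intro!: continuous_intros)
  also have "\<dots> = complex_of_real (integral\<^sup>L M (\<lambda>x. cos (t * Y x))) + \<i> * complex_of_real (integral\<^sup>L M (\<lambda>x. sin (t * Y x)))"
    by simp
  finally show ?thesis .
qed

lemma moments_distr:
  fixes Y1 :: "'a \<Rightarrow> real" and Y2 :: "'c \<Rightarrow> real"
  assumes P1: "prob_space M1" and P2: "prob_space M2"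
    and Y1: "Y1 \<in> borel_measurable M1" and Y2: "Y2 \<in> borel_measurable M2"
    and S: "compact S" and S1: "\<forall>x\<in>space M1. Y1 x \<in> S" and S2: "\<forall>x\<in>space M2. Y2 x \<in> S"
    and mom: "\<And>k. integral\<^sup>L M1 (\<lambda>x. Y1 x ^ k) = integral\<^sup>L M2 (\<lambda>x. Y2 x ^ k)"
  shows "distr M1 borel Y1 = distr M2 borel Y2"
proof (rule Levy_uniqueness)
  show "real_distribution (distr M1 borel Y1)"
    unfolding real_distribution_def real_distribution_axioms_def
    using prob_space.prob_space_distr[OF P1 Y1] by simp
  show "real_distribution (distr M2 borel Y2)"
    unfolding real_distribution_def real_distribution_axioms_def
    using prob_space.prob_space_distr[OF P2 Y2] by simp
  show "char (distr M1 borel Y1) = char (distr M2 borel Y2)"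
  proof
    fix t
    have c: "integral\<^sup>L M1 (\<lambda>x. cos (t * Y1 x)) = integral\<^sup>L M2 (\<lambda>x. cos (t * Y2 x))"
      by (rule moments_to_cont[OF P1 P2 Y1 Y2 S S1 S2 mom, of "\<lambda>y. cos (t * y)"])
        (intro continuous_intros)
    have s: "integral\<^sup>L M1 (\<lambda>x. sin (t * Y1 x)) = integral\<^sup>L M2 (\<lambda>x. sin (t * Y2 x))"
      by (rule moments_to_cont[OF P1 P2 Y1 Y2 S S1 S2 mom, of "\<lambda>y. sin (t * y)"])
        (intro continuous_intros)
    show "char (distr M1 borel Y1) t = char (distr M2 borel Y2) t"
      unfolding char_split[OF P1 Y1 S S1] char_split[OF P2 Y2 S S2] c s ..
  qed
qed

lemma mahler_distr:
  fixes f :: "'a \<Rightarrow> complex"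
  assumes X: "(\<lambda>y. (cmod (f y))\<^sup>2) \<in> borel_measurable M"
  shows "mahler M f =
    enn2ereal (\<integral>\<^sup>+ s. ennreal (max 0 (ln (sqrt s))) \<partial>(distr M borel (\<lambda>y. (cmod (f y))\<^sup>2))) -
    enn2ereal (\<integral>\<^sup>+ s. (if s = 0 then \<infinity> else ennreal (max 0 (- ln (sqrt s)))) \<partial>(distr M borel (\<lambda>y. (cmod (f y))\<^sup>2)))"
proof -
  have sq: "\<And>z::complex. sqrt ((cmod z)\<^sup>2) = cmod z" by simp
  have m1: "(\<lambda>s::real. ennreal (max 0 (ln (sqrt s)))) \<in> borel_measurable borel" by measurable
  have m2: "(\<lambda>s::real. (if s = 0 then \<infinity> else ennreal (max 0 (- ln (sqrt s))))) \<in> borel_measurable borel"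
    by measurable
  have e1: "(\<integral>\<^sup>+ s. ennreal (max 0 (ln (sqrt s))) \<partial>(distr M borel (\<lambda>y. (cmod (f y))\<^sup>2))) =
      (\<integral>\<^sup>+ x. ennreal (max 0 (ln (cmod (f x)))) \<partial>M)"
    by (subst nn_integral_distr[OF X]) (use m1 in auto)
  have e2: "(\<integral>\<^sup>+ s. (if s = 0 then \<infinity> else ennreal (max 0 (- ln (sqrt s)))) \<partial>(distr M borel (\<lambda>y. (cmod (f y))\<^sup>2))) =
      (\<integral>\<^sup>+ x. (if f x = 0 then \<infinity> else ennreal (max 0 (- ln (cmod (f x))))) \<partial>M)"
  proof -
    have pw: "\<And>x. (if (cmod (f x))\<^sup>2 = 0 then \<infinity> else ennreal (max 0 (- ln (sqrt ((cmod (f x))\<^sup>2))))) =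
       (if f x = 0 then \<infinity> else ennreal (max 0 (- ln (cmod (f x)))))" by (simp only: sq) simp
    have m2': "(\<lambda>s::real. (if s = 0 then \<infinity> else ennreal (max 0 (- ln (sqrt s))))) \<in> borel_measurable (distr M borel (\<lambda>y. (cmod (f y))\<^sup>2))"
      using m2 by (subst measurable_cong_sets[of _ borel]) auto
    show ?thesis unfolding nn_integral_distr[OF X m2'] pw ..
  qed
  show ?thesis unfolding mahler_def e1 e2 ..
qed

lemma int_char_combs_comp:
  fixes \<pi> :: "'a::{topological_group_add,ab_group_add} \<Rightarrow> 'b::{topological_group_add,ab_group_add}"
  assumes pc: "continuous_on UNIV \<pi>" and ph: "\<forall>x y. \<pi> (x + y) = \<pi> x + \<pi> y" and ps: "surj \<pi>"
    and f: "f \<in> int_char_combs"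
  shows "(\<lambda>x. f (\<pi> x)) \<in> int_char_combs"
proof -
  obtain S c where S: "finite S" "S \<subseteq> characters" and fe: "f = (\<lambda>x. \<Sum>chr\<in>S. of_int (c chr) * chr x)"
    using f unfolding int_char_combs_def by auto
  define g where "g = (\<lambda>(chr::'b \<Rightarrow> complex) x. chr (\<pi> x))"
  have inj: "inj g"
  proof (rule injI)
    fix c1 c2 assume "g c1 = g c2"
    then have "\<forall>x. c1 (\<pi> x) = c2 (\<pi> x)" unfolding g_def by metis
    then show "c1 = c2" using ps by (metis surjD ext)
  qed
  have "(\<lambda>x. f (\<pi> x)) = (\<lambda>x. \<Sum>psi\<in>g ` S. of_int (c (inv g psi)) * psi x)"
  proof
    fix x
    have "(\<Sum>psi\<in>g ` S. of_int (c (inv g psi)) * psi x) = (\<Sum>chr\<in>S. of_int (c (inv g (g chr))) * g chr x)"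
      by (subst sum.reindex) (use inj in \<open>auto intro: inj_on_subset\<close>)
    also have "\<dots> = (\<Sum>chr\<in>S. of_int (c chr) * g chr x)" by (simp only: inv_f_f[OF inj])
    also have "\<dots> = f (\<pi> x)" by (simp only: fe g_def)
    finally show "f (\<pi> x) = (\<Sum>psi\<in>g ` S. of_int (c (inv g psi)) * psi x)" ..
  qed
  moreover have "g ` S \<subseteq> characters" using S(2) char_comp[OF pc ph] unfolding g_def by auto
  ultimately show ?thesis using S(1) unfolding int_char_combs_def
    by (intro CollectI exI[where x="g ` S"] exI[where x="\<lambda>psi. c (inv g psi)"] conjI) simp_all
qed

lemma mahler_pull:
  fixes \<mu> :: "('a::{topological_group_add,ab_group_add,t2_space}) measure"
    and \<nu> :: "('b::{topological_group_add,ab_group_add,t2_space}) measure"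
    and \<pi> :: "'a \<Rightarrow> 'b"
  assumes hm: "haar \<mu>" and hn: "haar \<nu>"
    and pc: "continuous_on UNIV \<pi>" and ph: "\<forall>x y. \<pi> (x + y) = \<pi> x + \<pi> y" and ps: "surj \<pi>"
    and f: "f \<in> int_char_combs"
  shows "mahler \<mu> (\<lambda>x. f (\<pi> x)) = mahler \<nu> f"
proof -
  have fT: "f \<in> tpoly" by (rule int_char_combs_tpoly[OF f])
  have fc: "continuous_on UNIV f" by (rule tpoly_cont[OF fT])
  obtain B where B: "\<forall>y. norm (f y) \<le> B" using tpoly_bdd[OF fT] by auto
  define X where "X = (\<lambda>y. (cmod (f y))\<^sup>2)"
  have Xc: "continuous_on UNIV X" unfolding X_def by (intro continuous_intros fc)
  have Xpc: "continuous_on UNIV (\<lambda>x. X (\<pi> x))"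
    using Xc pc by (auto intro: continuous_on_compose2[where f=\<pi> and g=X and t=UNIV])
  have XS: "X y \<in> {0..B\<^sup>2}" for y
    unfolding X_def using B by (auto intro: power_mono)
  have mom: "integral\<^sup>L \<mu> (\<lambda>x. X (\<pi> x) ^ k) = integral\<^sup>L \<nu> (\<lambda>y. X y ^ k)" for k
  proof -
    have Fk: "(\<lambda>y. (f y * cnj (f y)) ^ k) \<in> tpoly"
      by (rule tpoly_pow[OF tpoly_mult[OF fT tpoly_cnj[OF fT]]])
    have eq: "(f y * cnj (f y)) ^ k = complex_of_real (X y ^ k)" for y
      unfolding X_def by (simp add: complex_norm_square[symmetric])
    have "integral\<^sup>L \<mu> (\<lambda>x. (f (\<pi> x) * cnj (f (\<pi> x))) ^ k) = integral\<^sup>L \<nu> (\<lambda>y. (f y * cnj (f y)) ^ k)"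
      by (rule tpoly_pull[OF hm hn pc ph ps Fk])
    then have "complex_of_real (integral\<^sup>L \<mu> (\<lambda>x. X (\<pi> x) ^ k)) = complex_of_real (integral\<^sup>L \<nu> (\<lambda>y. X y ^ k))"
      unfolding eq integral_complex_of_real .
    then show ?thesis by simp
  qed
  have D: "distr \<mu> borel (\<lambda>x. X (\<pi> x)) = distr \<nu> borel X"
    by (rule moments_distr[OF haar_prob[OF hm] haar_prob[OF hn] cont_meas[OF haar_sets[OF hm] Xpc]
          cont_meas[OF haar_sets[OF hn] Xc] compact_Icc _ _ mom]) (use XS in auto)
  have m1: "mahler \<mu> (\<lambda>x. f (\<pi> x)) =
    enn2ereal (\<integral>\<^sup>+ s. ennreal (max 0 (ln (sqrt s))) \<partial>(distr \<mu> borel (\<lambda>x. X (\<pi> x)))) -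
    enn2ereal (\<integral>\<^sup>+ s. (if s = 0 then \<infinity> else ennreal (max 0 (- ln (sqrt s)))) \<partial>(distr \<mu> borel (\<lambda>x. X (\<pi> x))))"
    using mahler_distr[of "\<lambda>x. f (\<pi> x)" \<mu>] cont_meas[OF haar_sets[OF hm] Xpc] unfolding X_def by simp
  have m2: "mahler \<nu> f =
    enn2ereal (\<integral>\<^sup>+ s. ennreal (max 0 (ln (sqrt s))) \<partial>(distr \<nu> borel X)) -
    enn2ereal (\<integral>\<^sup>+ s. (if s = 0 then \<infinity> else ennreal (max 0 (- ln (sqrt s)))) \<partial>(distr \<nu> borel X))"
    using mahler_distr[of f \<nu>] cont_meas[OF haar_sets[OF hn] Xc] unfolding X_def by simp
  show ?thesis unfolding m1 m2 D ..
qed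

theorem lemma2p2:
  fixes \<mu> :: "('a::{topological_group_add,ab_group_add,t2_space}) measure"
    and \<nu> :: "('b::{topological_group_add,ab_group_add,t2_space}) measure"
    and H :: "'a set"
    and \<pi> :: "'a \<Rightarrow> 'b"
  assumes "compact (UNIV :: 'a set)"
    and "haar \<mu>"
    and "closed H" and "0 \<in> H" and "\<forall>x\<in>H. \<forall>y\<in>H. x + y \<in> H" and "\<forall>x\<in>H. - x \<in> H"
    and "continuous_on UNIV \<pi>" and "\<forall>x y. \<pi> (x + y) = \<pi> x + \<pi> y"
    and "surj \<pi>" and "\<forall>U. open U \<longrightarrow> open (\<pi> ` U)"
    and "{x. \<pi> x = 0} = H"
    and "haar \<nu>"
  shows "lehmer \<mu> \<le> lehmer \<nu>"
proof -
  have sub: "{mahler \<nu> f | f. f \<in> int_char_combs \<and> mahler \<nu> f > 0} \<subseteq>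
             {mahler \<mu> f | f. f \<in> int_char_combs \<and> mahler \<mu> f > 0}"
  proof
    fix v assume "v \<in> {mahler \<nu> f | f. f \<in> int_char_combs \<and> mahler \<nu> f > 0}"
    then obtain f where f: "f \<in> int_char_combs" "mahler \<nu> f > 0" and v: "v = mahler \<nu> f" by auto
    have e: "mahler \<mu> (\<lambda>x. f (\<pi> x)) = mahler \<nu> f"
      by (rule mahler_pull[OF assms(2) assms(12) assms(7) assms(8) assms(9) f(1)])
    have c: "(\<lambda>x. f (\<pi> x)) \<in> int_char_combs"
      by (rule int_char_combs_comp[OF assms(7) assms(8) assms(9) f(1)])
    show "v \<in> {mahler \<mu> f | f. f \<in> int_char_combs \<and> mahler \<mu> f > 0}"
      using e c f v by (intro CollectI exI[where x="\<lambda>x. f (\<pi> x)"]) simp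
  qed
  show ?thesis unfolding lehmer_def by (rule Inf_superset_mono[OF sub])
qed

end
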